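(* Let $2\le k\le mn$, let $p_x\in\mathcal{P}_k$, let $\mathcal{D}\subseteq\mathbb{C}$, and let $F:\mathcal{D}\rightarrow M_{m\times n}(\mathbb{C})$ be defined by $F(z)=\sum_{i=0}^{s}A_i z^i$ with $A_i\in M_{m\times n}(\mathbb{C})$. Let $\mathcal{Z}_{p_x}(\mathcal{D})=\{z\in\mathcal{D} : F(z)\text{ has repeated zeros with respect to } p_x\}$. Then either $\mathcal{Z}_{p_x}(\mathcal{D})=\mathcal{D}$ or $\mathcal{Z}_{p_x}(\mathcal{D})$ is finite.
   Context: $M_{m\times n}(\mathbb{C})$ is the set of $m\times n$ complex matrices. Let $\mathbb{C}_k[x]$ be the set of complex polynomials of degree $k$ and $\mathbb{C}^k_{\mathrm{sym}}$ the set of unordered $k$-tuples of complex numbers; $r_k:\mathbb{C}_k[x]\to\mathbb{C}^k_{\mathrm{sym}}$ sends a polynomial to the unordered $k$-tuple of its roots (with multiplicity). $\mathcal{P}_k$ is the set of maps $p_x:M_{m\times n}(\mathbb{C})\to\mathbb{C}_k[x]$ of the form $p_x(A)=x^k+\sum_{i=1}^{k}q_i(A)x^{i-1}$, where each $q_i(A)$ is a polynomial function of the entries of $A$, such that $r_k(p_x(M_{m\times n}(\mathbb{C})))=\mathbb{C}^k_{\mathrm{sym}}$. $A$ has repeated zeros with respect to $p_x$ if the polynomial $p_x(A)$ (in $x$) has a root of multiplicity at least $2$, and distinct zeros otherwise. *)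

theory Defs
  imports "HOL-Analysis.Analysis" "HOL-Computational_Algebra.Polynomial"
begin

text \<open>Complex m x n matrices are rendered as complex ^'n ^'m (m = CARD('m), n = CARD('n)).\<close>

inductive entry_polyfun :: "(complex ^'n ^'m \<Rightarrow> complex) \<Rightarrow> bool" where
  const: "entry_polyfun (\<lambda>A. c)"
| entry: "entry_polyfun (\<lambda>A. A $ i $ j)"
| add: "entry_polyfun f \<Longrightarrow> entry_polyfun g \<Longrightarrow> entry_polyfun (\<lambda>A. f A + g A)"
| mult: "entry_polyfun f \<Longrightarrow> entry_polyfun g \<Longrightarrow> entry_polyfun (\<lambda>A. f A * g A)"

definition in_P :: "nat \<Rightarrow> (complex ^'n ^'m \<Rightarrow> complex poly) \<Rightarrow> bool" where
  "in_P k p \<longleftrightarrow>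
     (\<exists>q :: nat \<Rightarrow> (complex ^'n ^'m \<Rightarrow> complex).
        (\<forall>i\<in>{1..k}. entry_polyfun (q i)) \<and>
        (\<forall>A. p A = monom 1 k + (\<Sum>i=1..k. monom (q i A) (i - 1)))) \<and>
     (\<forall>R :: complex multiset. size R = k \<longrightarrow>
        (\<exists>A. \<forall>a. order a (p A) = count R a))"

definition repeated_zeros :: "(complex ^'n ^'m \<Rightarrow> complex poly) \<Rightarrow> complex ^'n ^'m \<Rightarrow> bool" where
  "repeated_zeros p A \<longleftrightarrow> (\<exists>x. order x (p A) \<ge> 2)"

definition matpoly :: "(nat \<Rightarrow> complex ^'n ^'m) \<Rightarrow> nat \<Rightarrow> complex \<Rightarrow> complex ^'n ^'m" where
  "matpoly A s z = (\<chi> a b. \<Sum>i\<le>s. z ^ i * (A i $ a $ b))"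

end

theory Submission imports Defs "Subresultants.Subresultant_Gcd" "HOL-Computational_Algebra.Field_as_Ring" "HOL-Computational_Algebra.Fundamental_Theorem_Algebra" begin

lemma entry_polyfun_poly:
  fixes A :: "nat \<Rightarrow> complex ^'n ^'m"
  assumes "entry_polyfun f"
  shows "\<exists>P. \<forall>z. f (matpoly A s z) = poly P z"
  using assms
proof (induction rule: entry_polyfun.induct)
  case (const c)
  then show ?case by (intro exI[of _ "[:c:]"]) simp
next
  case (entry i j)
  show ?case
    by (intro exI[of _ "\<Sum>l\<le>s. monom (A l $ i $ j) l"])
       (simp add: matpoly_def poly_sum poly_monom mult.commute)
next
  case (add f g)
  then obtain P Q where "\<forall>z. f (matpoly A s z) = poly P z" "\<forall>z. g (matpoly A s z) = poly Q z" by blast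
  then show ?case by (intro exI[of _ "P + Q"]) simp
next
  case (mult f g)
  then obtain P Q where "\<forall>z. f (matpoly A s z) = poly P z" "\<forall>z. g (matpoly A s z) = poly Q z" by blast
  then show ?case by (intro exI[of _ "P * Q"]) simp
qed

lemma degree_monic_form:
  fixes c :: "nat \<Rightarrow> 'a :: comm_ring_1"
  assumes "k \<ge> 1" "(1::'a) \<noteq> 0"
  shows "degree (monom 1 k + (\<Sum>i=1..k. monom (c i) (i - 1))) = k"
proof -
  have "degree (\<Sum>i=1..k. monom (c i) (i - 1)) \<le> k - 1"
    by (rule degree_sum_le) (auto intro: order.trans[OF degree_monom_le])
  also have "\<dots> < degree (monom (1::'a) k)" using assms by (simp add: degree_monom_eq)
  finally show ?thesis using assms by (subst degree_add_eq_left) (auto simp: degree_monom_eq)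
qed

lemma rep_iff_gcd:
  fixes P :: "complex poly"
  assumes "degree P \<ge> 2"
  shows "(\<exists>x. order x P \<ge> 2) \<longleftrightarrow> degree (gcd P (pderiv P)) \<noteq> 0"
proof
  have P0: "P \<noteq> 0" using assms by auto
  have P'0: "pderiv P \<noteq> 0" using assms by (simp add: pderiv_eq_0_iff)
  assume "\<exists>x. order x P \<ge> 2"
  then obtain x where x: "order x P \<ge> 2" by blast
  have r: "poly P x = 0" using x P0 order_root by fastforce
  have "order x P = Suc (order x (pderiv P))" using order_pderiv[OF P0 r] .
  hence "order x (pderiv P) \<noteq> 0" using x by simp
  hence r': "poly (pderiv P) x = 0" using order_root by blast
  have "[:-x,1:] dvd gcd P (pderiv P)" using r r' by (simp add: poly_eq_0_iff_dvd)
  moreover have "gcd P (pderiv P) \<noteq> 0" using P0 by simp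
  ultimately have "degree [:-x,1:] \<le> degree (gcd P (pderiv P))" by (rule dvd_imp_degree_le)
  thus "degree (gcd P (pderiv P)) \<noteq> 0" by simp
next
  have P0: "P \<noteq> 0" using assms by auto
  have P'0: "pderiv P \<noteq> 0" using assms by (simp add: pderiv_eq_0_iff)
  assume "degree (gcd P (pderiv P)) \<noteq> 0"
  then obtain x where x: "poly (gcd P (pderiv P)) x = 0"
    by (metis fundamental_theorem_of_algebra constant_degree)
  have r: "poly P x = 0" using x by (metis gcd_dvd1 poly_0 dvd_def poly_mult mult_zero_left)
  have r': "poly (pderiv P) x = 0" using x by (metis gcd_dvd2 poly_0 dvd_def poly_mult mult_zero_left)
  have "order x (pderiv P) \<noteq> 0" using r' P'0 order_root by blast
  hence "order x P \<ge> 2" using order_pderiv[OF P0 r] by simp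
  thus "\<exists>x. order x P \<ge> 2" by blast
qed

lemma map_poly_eval_sum:
  "map_poly (\<lambda>c. poly c (z::complex)) (sum g (S::nat set)) = (\<Sum>i\<in>S. map_poly (\<lambda>c. poly c z) (g i))"
proof (induction S rule: infinite_finite_induct)
  case (insert x F)
  then show ?case by (simp add: map_poly_add)
qed auto

theorem theorem5p4:
  fixes k s :: nat and p :: "complex ^'n ^'m \<Rightarrow> complex poly"
    and D :: "complex set" and A :: "nat \<Rightarrow> complex ^'n ^'m"
  assumes "2 \<le> k" and "k \<le> CARD('m) * CARD('n)" and "in_P k p"
  shows "{z \<in> D. repeated_zeros p (matpoly A s z)} = D
         \<or> finite {z \<in> D. repeated_zeros p (matpoly A s z)}"
proof -
  obtain q :: "nat \<Rightarrow> (complex ^'n ^'m \<Rightarrow> complex)" where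
    q: "\<forall>i\<in>{1..k}. entry_polyfun (q i)"
    and pq: "\<forall>B. p B = monom 1 k + (\<Sum>i=1..k. monom (q i B) (i - 1))"
    using assms(3) unfolding in_P_def by blast
  have "\<forall>i\<in>{1..k}. \<exists>P. \<forall>z. q i (matpoly A s z) = poly P z"
    using q entry_polyfun_poly by blast
  then obtain Q where Q: "\<And>i z. i \<in> {1..k} \<Longrightarrow> q i (matpoly A s z) = poly (Q i) z"
    by metis
  define H :: "complex poly poly" where "H = monom 1 k + (\<Sum>i=1..k. monom (Q i) (i - 1))"
  define R where "R = resultant H (pderiv H)"
  have degH: "degree H = k" unfolding H_def using assms(1) by (intro degree_monic_form) auto
  have mapH: "map_poly (\<lambda>c. poly c z) H = p (matpoly A s z)" for z
  proof -
    have "map_poly (\<lambda>c. poly c z) H = monom 1 k + (\<Sum>i=1..k. monom (poly (Q i) z) (i - 1))"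
      unfolding H_def
      by (simp add: poly_hom.map_poly_hom_monom map_poly_add map_poly_eval_sum)
    also have "\<dots> = monom 1 k + (\<Sum>i=1..k. monom (q i (matpoly A s z)) (i - 1))"
      using Q by (intro arg_cong2[where f="(+)"] refl sum.cong) auto
    also have "\<dots> = p (matpoly A s z)" using pq by simp
    finally show ?thesis .
  qed
  have key: "repeated_zeros p (matpoly A s z) \<longleftrightarrow> poly R z = 0" for z
  proof -
    let ?P = "p (matpoly A s z)"
    have degP: "degree ?P = k" unfolding pq[rule_format] using assms(1) by (intro degree_monic_form) auto
    have degP': "degree (pderiv ?P) = k - 1" using degP by (simp add: degree_pderiv)
    have "degree (pderiv H) \<le> k - 1" using degH degree_pderiv_le by metis
    moreover have "degree (map_poly (\<lambda>c. poly c z) (pderiv H)) \<le> degree (pderiv H)"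
      by (rule degree_map_poly_le)
    moreover have "map_poly (\<lambda>c. poly c z) (pderiv H) = pderiv ?P"
      using mapH poly_hom.map_poly_pderiv by metis
    ultimately have degH': "degree (map_poly (\<lambda>c. poly c z) (pderiv H)) = degree (pderiv H)"
      using degP' by simp
    have "resultant ?P (pderiv ?P) = poly R z"
      unfolding R_def
      using poly_hom.resultant_map_poly[OF _ degH', of H] mapH degH degP
        \<open>map_poly (\<lambda>c. poly c z) (pderiv H) = pderiv ?P\<close> by metis
    moreover have "repeated_zeros p (matpoly A s z) \<longleftrightarrow> resultant ?P (pderiv ?P) = 0"
      unfolding repeated_zeros_def resultant_0_gcd using rep_iff_gcd[of ?P] degP assms(1) by simp
    ultimately show ?thesis by simp
  qed
  show ?thesis
  proof (cases "R = 0")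
    case True
    then show ?thesis using key by auto
  next
    case False
    have "{z \<in> D. repeated_zeros p (matpoly A s z)} \<subseteq> {z. poly R z = 0}" using key by auto
    then show ?thesis using poly_roots_finite[OF False] finite_subset by blast
  qed
qed

end
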